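(* Let $q$ be a prime power and let $1\le t_1<\cdots<t_r<n$ be divisors of $n$ such that $t_i$ divides $t_{i+1}$ for $1\le i\le r-1$. Let $\mathcal{F}=(\mathcal{F}_1,\ldots,\mathcal{F}_r)=(\mathbb{F}_{q^{t_1}},\ldots,\mathbb{F}_{q^{t_r}})$ be the Galois flag of this type on $\mathbb{F}_{q^n}$ and let $\beta\in\mathbb{F}_{q^n}^*$. For $1\le i\le r$ write $\mathrm{Stab}_\beta(\mathcal{F}_i)=\{\gamma\in\langle\beta\rangle:\mathcal{F}_i\gamma=\mathcal{F}_i\}=\langle\beta\rangle\cap\mathbb{F}_{q^{t_i}}^*$. Then $d_f(\mathrm{Orb}_\beta(\mathcal{F}))\in\{0,2t_1,2(t_1+t_2),\ldots,2(t_1+\cdots+t_r)\}$. Moreover: (1) $d_f(\mathrm{Orb}_\beta(\mathcal{F}))=0$ if and only if $\mathrm{Stab}_\beta(\mathcal{F}_1)=\mathrm{Stab}_\beta(\mathcal{F}_r)=\langle\beta\rangle$; (2) $d_f(\mathrm{Orb}_\beta(\mathcal{F}))=2\sum_{i=1}^r t_i$ if and only if $\mathrm{Stab}_\beta(\mathcal{F}_1)=\mathrm{Stab}_\beta(\mathcal{F}_r)\neq\langle\beta\rangle$; (3) $d_f(\mathrm{Orb}_\beta(\mathcal{F}))=2\sum_{i=1}^{j-1}t_i$ if and only if $\mathrm{Stab}_\beta(\mathcal{F}_1)\neq\mathrm{Stab}_\beta(\mathcal{F}_r)$ and $j\in\{2,\ldots,r\}$ is the minimum index such that $\mathrm{S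tab}_\beta(\mathcal{F}_1)\subsetneq\mathrm{Stab}_\beta(\mathcal{F}_j)$.
   Context: $\mathbb{F}_{q^n}$ is regarded as an $\mathbb{F}_q$-vector space. For $\gamma\in\mathbb{F}_{q^n}^*$, $\mathcal{U}\gamma=\{u\gamma:u\in\mathcal{U}\}$ and $\mathcal{F}\gamma=(\mathcal{F}_1\gamma,\ldots,\mathcal{F}_r\gamma)$. For $\beta$ of multiplicative order $|\beta|$, $\mathrm{Orb}_\beta(\mathcal{F})=\{\mathcal{F}\beta^j:0\le j\le|\beta|-1\}$. Subspace distance: $d_S(\mathcal{U},\mathcal{V})=\dim(\mathcal{U}+\mathcal{V})-\dim(\mathcal{U}\cap\mathcal{V})$; flag distance $d_f(\mathcal{F},\mathcal{F}')=\sum_{i=1}^r d_S(\mathcal{F}_i,\mathcal{F}'_i)$. The minimum distance $d_f(\mathcal{C})$ of a set of flags is the minimum flag distance between distinct elements, and $0$ if $|\mathcal{C}|=1$. *)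

theory Defs
  imports "HOL-Computational_Algebra.Primes" "HOL-Library.Cardinality"
begin

text \<open>The ambient field F_{q^n} is a finite field type 'a with CARD('a) = q^n.\<close>

definition prime_power :: "nat \<Rightarrow> bool" where
  "prime_power q \<longleftrightarrow> (\<exists>p k. prime p \<and> k > 0 \<and> q = p ^ k)"

definition subfield_of_order :: "nat \<Rightarrow> nat \<Rightarrow> 'a::{field,finite} set" where
  "subfield_of_order q t = {x. x ^ (q ^ t) = x}"

definition sdim :: "nat \<Rightarrow> 'a set \<Rightarrow> nat" where
  "sdim q U = (THE k. card U = q ^ k)"

definition ssum :: "'a::plus set \<Rightarrow> 'a set \<Rightarrow> 'a set" where
  "ssum U V = {u + v | u v. u \<in> U \<and> v \<in> V}"

definition subspace_dist :: "nat \<Rightarrow> 'a::plus set \<Rightarrow> 'a set \<Rightarrow> nat" where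
  "subspace_dist q U V = sdim q (ssum U V) - sdim q (U \<inter> V)"

definition flag_dist :: "nat \<Rightarrow> 'a::plus set list \<Rightarrow> 'a set list \<Rightarrow> nat" where
  "flag_dist q F G = sum_list (map2 (subspace_dist q) F G)"

definition set_scale :: "'a::times set \<Rightarrow> 'a \<Rightarrow> 'a set" where
  "set_scale U \<gamma> = (\<lambda>u. u * \<gamma>) ` U"

definition flag_scale :: "'a::times set list \<Rightarrow> 'a \<Rightarrow> 'a set list" where
  "flag_scale F \<gamma> = map (\<lambda>U. set_scale U \<gamma>) F"

definition mult_order :: "'a::monoid_mult \<Rightarrow> nat" where
  "mult_order \<beta> = (LEAST k. k > 0 \<and> \<beta> ^ k = 1)"

definition orbit :: "'a::monoid_mult \<Rightarrow> 'a set list \<Rightarrow> 'a set list set" where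
  "orbit \<beta> F = {flag_scale F (\<beta> ^ j) | j. j \<le> mult_order \<beta> - 1}"

definition cyc :: "'a::monoid_mult \<Rightarrow> 'a set" where
  "cyc \<beta> = {\<beta> ^ j | j. True}"

definition stab :: "'a::monoid_mult \<Rightarrow> 'a set \<Rightarrow> 'a set" where
  "stab \<beta> U = {\<gamma> \<in> cyc \<beta>. set_scale U \<gamma> = U}"

definition min_flag_dist :: "nat \<Rightarrow> 'a::plus set list set \<Rightarrow> nat" where
  "min_flag_dist q C = (if card C \<le> 1 then 0
     else Min {flag_dist q F G | F G. F \<in> C \<and> G \<in> C \<and> F \<noteq> G})"

definition galois_flag :: "nat \<Rightarrow> nat \<Rightarrow> (nat \<Rightarrow> nat) \<Rightarrow> 'a::{field,finite} set list" where
  "galois_flag q r t = map (\<lambda>i. subfield_of_order q (t i)) [1..<r+1]"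

end

theory Submission
  imports Defs "HOL-Number_Theory.Residues" "HOL-Computational_Algebra.Polynomial"
begin


lemma pow_card_minus1:
  fixes x :: "'a::{field,finite}"
  assumes "x \<noteq> 0" shows "x ^ (CARD('a) - 1) = 1"
proof -
  define P where "P = (\<Prod>y\<in>UNIV-{0::'a}. y)"
  have "(\<Prod>y\<in>UNIV-{0::'a}. x * y) = x ^ card (UNIV-{0::'a}) * P"
    unfolding P_def by (simp add: prod.distrib)
  moreover have "card (UNIV-{0::'a}) = CARD('a) - 1" by (simp add: card_Diff_singleton)
  moreover have "(\<Prod>y\<in>UNIV-{0}. x * y) = P"
    unfolding P_def by (rule prod.reindex_bij_witness[of _ "\<lambda>y. y / x" "\<lambda>y. x * y"]) (use assms in auto)
  moreover have "P \<noteq> 0" unfolding P_def by simp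
  ultimately have "x ^ (CARD('a) - 1) * P = 1 * P" by simp
  then show ?thesis using \<open>P \<noteq> 0\<close> by (simp only: mult_cancel_right) simp
qed

lemma pow_card_same:
  fixes x :: "'a::{field,finite}"
  shows "x ^ CARD('a) = x"
proof (cases "x = 0")
  case True
  have "CARD('a) \<noteq> 0" by simp
  then show ?thesis using True by (simp add: power_0_left)
next
  case False
  have e: "CARD('a) = Suc (CARD('a) - 1)" by simp
  have "x ^ CARD('a) = x ^ Suc (CARD('a) - 1)" by (subst e) (rule refl)
  also have "\<dots> = x * x ^ (CARD('a) - 1)" by (rule power_Suc)
  finally show ?thesis using pow_card_minus1[OF False] by simp
qed

lemma char_q:
  assumes "prime_power q" "CARD('a::{field,finite}) = q ^ n"
  shows "\<exists>k. q = CHAR('a) ^ k"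
proof -
  obtain p k where pk: "prime p" "k > 0" "q = p ^ k" using assms(1) unfolding prime_power_def by blast
  have "CHAR('a) > 0" by (rule finite_imp_CHAR_pos) simp
  then have cp: "prime CHAR('a)" by (rule prime_CHAR_semidom)
  have "CHAR('a) dvd CARD('a)" by (rule CHAR_dvd_CARD)
  then have "CHAR('a) dvd p ^ (k * n)" using assms(2) pk(3) by (simp add: power_mult)
  then have "CHAR('a) dvd p" by (rule prime_dvd_power[OF cp])
  then have "CHAR('a) = p" using cp pk(1) primes_dvd_imp_eq by blast
  then show ?thesis using pk(3) by blast
qed

lemma frob_add:
  fixes x y :: "'a::{field,finite}"
  assumes "q = CHAR('a) ^ k"
  shows "(x + y) ^ (q ^ t) = x ^ (q ^ t) + y ^ (q ^ t)"
proof -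
  have "CHAR('a) > 0" by (rule finite_imp_CHAR_pos) simp
  then have cp: "prime CHAR('a)" by (rule prime_CHAR_semidom)
  have "q ^ t = CHAR('a) ^ (k * t)" by (simp add: assms power_mult)
  then show ?thesis by (rule freshmans_dream'[OF cp])
qed

lemma frob_diff:
  fixes x y :: "'a::{field,finite}"
  assumes "q = CHAR('a) ^ k"
  shows "(x - y) ^ (q ^ t) = x ^ (q ^ t) - y ^ (q ^ t)"
proof -
  have "x ^ (q ^ t) = ((x - y) + y) ^ (q ^ t)" by simp
  also have "\<dots> = (x - y) ^ (q ^ t) + y ^ (q ^ t)" by (rule frob_add[OF assms])
  finally show ?thesis by (simp add: eq_diff_eq)
qed

lemma sub_add:
  fixes x y :: "'a::{field,finite}"
  assumes "q = CHAR('a) ^ k" "x \<in> subfield_of_order q t" "y \<in> subfield_of_order q t"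
  shows "x + y \<in> subfield_of_order q t" "x - y \<in> subfield_of_order q t"
proof -
  have "x ^ (q^t) = x" "y^(q^t) = y" using assms(2,3) by (simp_all add: subfield_of_order_def)
  then show "x + y \<in> subfield_of_order q t" "x - y \<in> subfield_of_order q t"
    using frob_add[OF assms(1), of x y t] frob_diff[OF assms(1), of x y t]
    by (simp_all add: subfield_of_order_def)
qed

lemma sub_mult:
  assumes "x \<in> subfield_of_order q t" "y \<in> subfield_of_order q t"
  shows "x * y \<in> subfield_of_order q t"
  using assms unfolding subfield_of_order_def by (auto simp: power_mult_distrib)

lemma sub_inverse:
  fixes x :: "'a::{field,finite}"
  assumes "x \<in> subfield_of_order q t"
  shows "inverse x \<in> subfield_of_order q t"
  using assms unfolding subfield_of_order_def by (auto simp: power_inverse)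

lemma sub_0: "q > 0 \<Longrightarrow> (0::'a::{field,finite}) \<in> subfield_of_order q t" 
  unfolding subfield_of_order_def by simp

lemma sub_mono:
  assumes "t dvd t'"
  shows "subfield_of_order q t \<subseteq> (subfield_of_order q t' :: 'a::{field,finite} set)"
proof
  fix x :: 'a assume x: "x \<in> subfield_of_order q t"
  obtain s where s: "t' = t * s" using assms by blast
  have "x ^ (q ^ (t * s)) = x" for s
  proof (induction s)
    case 0 then show ?case by simp
  next
    case (Suc s)
    have "q ^ (t * Suc s) = q^t * q^(t*s)" by (simp add: power_add)
    then have "x ^ (q ^ (t * Suc s)) = (x ^ (q ^ t)) ^ (q ^ (t * s))"
      by (simp add: power_mult)
    then show ?case using x Suc unfolding subfield_of_order_def by simp
  qed
  then show "x \<in> subfield_of_order q t'" using s unfolding subfield_of_order_def by simp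
qed

lemma nat_pow_minus1_dvd:
  fixes x :: nat assumes "x \<ge> 1" shows "(x - 1) dvd (x ^ s - 1)"
proof (induction s)
  case 0 then show ?case by simp
next
  case (Suc s)
  have "x ^ Suc s - 1 = x * (x^s - 1) + (x - 1)"
    using assms by (simp add: algebra_simps right_diff_distrib')
  then show ?case using Suc by simp
qed

lemma roots_unity_bound:
  assumes "m \<ge> 1"
  shows "card {x::'a::{field,finite}. x ^ m = 1} \<le> m"
proof -
  define p :: "'a poly" where "p = monom 1 m - 1"
  have ev: "poly p x = x ^ m - 1" for x by (simp add: p_def poly_monom)
  have "p \<noteq> 0"
  proof
    assume "p = 0"
    then have "poly p 0 = 0" by simp
    then show False using assms ev[of 0] by (simp add: power_0_left)
  qed
  then have "card {x. poly p x = 0} \<le> degree p" by (rule card_poly_roots_bound)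
  also have "degree p \<le> m" unfolding p_def
    using degree_diff_le_max[of "monom (1::'a) m" 1] by (simp add: degree_monom_eq)
  finally show ?thesis using ev by simp
qed

lemma card_ge2: "CARD('a::{field,finite}) \<ge> 2"
proof -
  have "card {0::'a, 1} \<le> CARD('a)" by (rule card_mono) auto
  then show ?thesis by simp
qed

lemma card_sub:
  assumes "CARD('a::{field,finite}) = q ^ n" "q \<ge> 2" "t dvd n" "t > 0"
  shows "card (subfield_of_order q t :: 'a set) = q ^ t"
proof -
  define M where "M = q^t - 1"
  have "q ^ t \<ge> q" using assms(2,4) by (simp add: self_le_power)
  then have M1: "M \<ge> 1" and qtM: "q ^ t = Suc M" using assms(2) unfolding M_def by auto
  have "M dvd (q^n - 1)" unfolding M_def
    using assms(3) nat_pow_minus1_dvd[of "q^t"] assms(2) by (auto simp: power_mult elim!: dvdE)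
  then obtain k where k: "q^n - 1 = M * k" by blast
  have cG: "CARD('a) - 1 = M * k" using k assms(1) by simp
  have "k > 0" using cG card_ge2[where 'a='a] by (cases k) auto
  define H where "H = {x::'a. x ^ M = 1}"
  have cH: "card H \<le> M" unfolding H_def using roots_unity_bound M1 by blast
  define G where "G = UNIV - {0::'a}"
  have cardG: "card G = M * k" unfolding G_def using cG by (simp add: card_Diff_singleton)
  define f where "f = (\<lambda>x::'a. x ^ M)"
  have img: "f ` G \<subseteq> {y. y ^ k = 1}"
  proof
    fix y assume "y \<in> f ` G"
    then obtain x where x: "x \<noteq> 0" "y = x ^ M" unfolding G_def f_def by auto
    have "y ^ k = x ^ (CARD('a) - 1)" using x cG by (simp add: power_mult)
    then show "y \<in> {y. y ^ k = 1}" using pow_card_minus1[OF x(1)] by simp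
  qed
  have cimg: "card (f ` G) \<le> k"
    using card_mono[OF finite img] roots_unity_bound[of k, where 'a='a] \<open>k > 0\<close> by simp
  have fib: "card {x \<in> G. f x = y} \<le> card H" if "y \<in> f ` G" for y
  proof -
    obtain x0 where x0: "x0 \<in> G" "y = f x0" using \<open>y \<in> f ` G\<close> by blast
    have "{x \<in> G. f x = y} \<subseteq> (\<lambda>h. x0 * h) ` H"
    proof
      fix x assume x: "x \<in> {x \<in> G. f x = y}"
      have "x0 \<noteq> 0" using x0 unfolding G_def by simp
      have "(x / x0) ^ M = 1" using x x0 \<open>x0 \<noteq> 0\<close> unfolding f_def G_def by (simp add: power_divide)
      moreover have "x = x0 * (x / x0)" using \<open>x0 \<noteq> 0\<close> by simp
      ultimately show "x \<in> (\<lambda>h. x0 * h) ` H" unfolding H_def by blast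
    qed
    then have "card {x \<in> G. f x = y} \<le> card ((\<lambda>h. x0 * h) ` H)" by (intro card_mono) auto
    also have "\<dots> \<le> card H" by (rule card_image_le) simp
    finally show ?thesis .
  qed
  have "G \<subseteq> (\<Union>y\<in>f ` G. {x \<in> G. f x = y})" by blast
  then have "card G \<le> card (\<Union>y\<in>f ` G. {x \<in> G. f x = y})" by (intro card_mono) auto
  also have "\<dots> \<le> (\<Sum>y\<in>f ` G. card {x \<in> G. f x = y})" by (rule card_UN_le) simp
  also have "\<dots> \<le> (\<Sum>y\<in>f ` G. card H)" by (rule sum_mono) (use fib in auto)
  also have "\<dots> = card (f ` G) * card H" by simp
  also have "\<dots> \<le> k * card H" using cimg by simp
  finally have "M * k \<le> k * card H" using cardG by simp
  then have "M \<le> card H" using \<open>k > 0\<close> by (simp add: mult.commute)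
  with cH have cardH: "card H = M" by simp
  have "subfield_of_order q t = insert 0 H"
  proof
    show "subfield_of_order q t \<subseteq> insert 0 H"
    proof
      fix x :: 'a assume "x \<in> subfield_of_order q t"
      then have "x * x ^ M = x" unfolding subfield_of_order_def using qtM by simp
      then show "x \<in> insert 0 H" unfolding H_def by (cases "x = 0") auto
    qed
    show "insert 0 H \<subseteq> subfield_of_order q t"
      unfolding subfield_of_order_def H_def using qtM by auto
  qed
  moreover have "0 \<notin> H" unfolding H_def using M1 by (simp add: power_0_left)
  ultimately show ?thesis using cardH qtM by simp
qed

lemma ps_mono:
  fixes t :: "nat \<Rightarrow> nat"
  assumes "\<forall>i\<in>{1..r}. t i > 0" "k < k'" "k' \<le> r"
  shows "(\<Sum>i=1..k. t i) < (\<Sum>i=1..k'. t i)"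
  using assms(2,3)
proof (induction k')
  case 0 then show ?case by simp
next
  case (Suc m)
  have "(\<Sum>i=1..Suc m. t i) = (\<Sum>i=1..m. t i) + t (Suc m)" by simp
  moreover have "t (Suc m) > 0" using assms(1) Suc.prems by simp
  ultimately show ?case using Suc by (cases "k = m") auto
qed

lemma ps_inj:
  fixes t :: "nat \<Rightarrow> nat"
  assumes "\<forall>i\<in>{1..r}. t i > 0" "a \<le> r" "b \<le> r"
  shows "(\<Sum>i=1..a. t i) = (\<Sum>i=1..b. t i) \<longleftrightarrow> a = b"
  using ps_mono[OF assms(1), of a b] ps_mono[OF assms(1), of b a] assms(2,3)
  by (metis linorder_neqE_nat less_irrefl)

lemma combi:
  fixes Z :: "'a set" and K :: "nat \<Rightarrow> 'a set" and t :: "nat \<Rightarrow> nat"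
  assumes fin: "finite Z" and r1: "r \<ge> 1" and tpos: "\<forall>i\<in>{1..r}. t i > 0"
    and nest: "\<forall>i j. 1 \<le> i \<and> i \<le> j \<and> j \<le> r \<longrightarrow> K i \<subseteq> K j"
    and Sdef: "S = (\<lambda>i. Z \<inter> K i)"
    and ddef: "d = (if Z \<subseteq> K 1 then 0 else
           Min ((\<lambda>\<gamma>. \<Sum>i\<in>{1..r}. if \<gamma> \<in> K i then 0 else 2 * t i) ` (Z - K 1)))"
  shows "d \<in> {0} \<union> {2 * (\<Sum>i=1..k. t i) | k. k \<in> {1..r}}
    \<and> (d = 0 \<longleftrightarrow> S 1 = Z \<and> S r = Z)
    \<and> (d = 2 * (\<Sum>i=1..r. t i) \<longleftrightarrow> S 1 = S r \<and> S 1 \<noteq> Z)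
    \<and> (\<forall>j\<in>{2..r}. d = 2 * (\<Sum>i=1..j-1. t i) \<longleftrightarrow>
          S 1 \<noteq> S r \<and> S 1 \<subset> S j \<and> (\<forall>k\<in>{2..<j}. \<not> S 1 \<subset> S k))"
proof -
  define ps where "ps = (\<lambda>k. \<Sum>i=1..k. t i)"
  have ps0: "ps 0 = 0" unfolding ps_def by simp
  have psinj: "a \<le> r \<Longrightarrow> b \<le> r \<Longrightarrow> ps a = ps b \<longleftrightarrow> a = b" for a b
    unfolding ps_def using ps_inj[OF tpos] by blast
  have pspos: "1 \<le> a \<Longrightarrow> a \<le> r \<Longrightarrow> ps a > 0" for a
    using ps_mono[OF tpos, of 0 a] unfolding ps_def by simp
  have Smono: "1 \<le> i \<Longrightarrow> i \<le> j \<Longrightarrow> j \<le> r \<Longrightarrow> S i \<subseteq> S j" for i j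
    using nest unfolding Sdef by blast
  show ?thesis
  proof (cases "Z \<subseteq> K 1")
    case True
    then have d0: "d = 0" using ddef by simp
    have S1: "S 1 = Z" using True Sdef by auto
    have Sr: "S r = Z" using Smono[of 1 r] r1 S1 Sdef by auto
    have "ps r > 0" using pspos r1 by simp
    then have C: "d \<noteq> 2 * (\<Sum>i=1..r. t i)" using d0 unfolding ps_def by linarith
    have D: "\<forall>j\<in>{2..r}. d \<noteq> 2 * (\<Sum>i=1..j-1. t i)"
    proof
      fix j assume "j \<in> {2..r}"
      then have "ps (j - 1) > 0" using pspos[of "j-1"] by auto
      then show "d \<noteq> 2 * (\<Sum>i=1..j-1. t i)" using d0 unfolding ps_def by linarith
    qed
    show ?thesis using d0 S1 Sr C D by auto
  next
    case False
    define Dist where "Dist = (\<lambda>\<gamma>. \<Sum>i\<in>{1..r}. if \<gamma> \<in> K i then 0 else 2 * t i)"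
    have dD: "d = Min (Dist ` (Z - K 1))" using ddef False unfolding Dist_def by simp
    define J where "J = {j\<in>{2..r}. S 1 \<subset> S j}"
    define j0 where "j0 = (if J = {} then r + 1 else Min J)"
    have finJ: "finite J" unfolding J_def by simp
    have j0J: "J \<noteq> {} \<Longrightarrow> j0 \<in> J" unfolding j0_def using finJ by simp
    have j0min: "j \<in> J \<Longrightarrow> j0 \<le> j" for j unfolding j0_def using finJ by auto
    have j0r': "2 \<le> j0 \<and> j0 \<le> r + 1"
    proof (cases "J = {}")
      case True then show ?thesis using r1 unfolding j0_def by simp
    next
      case False
      then have "j0 \<in> J" by (rule j0J)
      then show ?thesis unfolding J_def by simp
    qed
    then have j0r: "2 \<le> j0" "j0 \<le> r + 1" by auto
    have b: "\<gamma> \<notin> K i" if "\<gamma> \<in> Z - K 1" "i \<in> {1..<j0}" for \<gamma> i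
    proof
      assume gi: "\<gamma> \<in> K i"
      have "i \<noteq> 1" using that gi by auto
      then have "i \<in> {2..r}" using that j0r by auto
      moreover have "S 1 \<subset> S i" using Smono[of 1 i] \<open>i \<in> {2..r}\<close> gi that unfolding Sdef by auto
      ultimately have "i \<in> J" unfolding J_def by simp
      then show False using j0min that by fastforce
    qed
    obtain \<gamma>0 where g0: "\<gamma>0 \<in> Z - K 1" "\<forall>i\<in>{j0..r}. \<gamma>0 \<in> K i"
    proof (cases "J = {}")
      case True
      then have "{j0..r} = {}" unfolding j0_def by simp
      then show ?thesis using False that by auto
    next
      case False
      then have "j0 \<in> J" by (rule j0J)
      then have "S 1 \<subset> S j0" and j0r': "j0 \<le> r" unfolding J_def by auto
      then obtain g where g: "g \<in> S j0" "g \<notin> S 1" by blast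
      have gK: "g \<in> K j0" using g unfolding Sdef by simp
      have "\<forall>i\<in>{j0..r}. g \<in> K i"
      proof
        fix i assume "i \<in> {j0..r}"
        then have "K j0 \<subseteq> K i" using nest j0r by auto
        then show "g \<in> K i" using gK by blast
      qed
      then show ?thesis using g that unfolding Sdef by auto
    qed
    define V where "V = (\<Sum>i\<in>{1..<j0}. 2 * t i)"
    have sub: "{1..<j0} \<subseteq> {1..r}" using j0r by auto
    have lower: "V \<le> Dist \<gamma>" if "\<gamma> \<in> Z - K 1" for \<gamma>
    proof -
      have "V = (\<Sum>i\<in>{1..<j0}. if \<gamma> \<in> K i then 0 else 2 * t i)"
        unfolding V_def using b[OF that] by (intro sum.cong) auto
      also have "\<dots> \<le> Dist \<gamma>" unfolding Dist_def by (rule sum_mono2[OF _ sub]) auto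
      finally show ?thesis .
    qed
    have att: "Dist \<gamma>0 = V"
    proof -
      have split: "{1..r} = {1..<j0} \<union> {j0..r}" using j0r by auto
      have "Dist \<gamma>0 = (\<Sum>i\<in>{1..<j0}. if \<gamma>0 \<in> K i then 0 else 2 * t i)
             + (\<Sum>i\<in>{j0..r}. if \<gamma>0 \<in> K i then 0 else 2 * t i)"
        unfolding Dist_def split by (rule sum.union_disjoint) auto
      also have "(\<Sum>i\<in>{j0..r}. if \<gamma>0 \<in> K i then 0 else 2 * t i) = 0" using g0 by simp
      also have "(\<Sum>i\<in>{1..<j0}. if \<gamma>0 \<in> K i then 0 else 2 * t i) = V"
        unfolding V_def using b[OF g0(1)] by (intro sum.cong) auto
      finally show ?thesis by simp
    qed
    have dV: "d = V" unfolding dD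
    proof (rule Min_eqI)
      show "finite (Dist ` (Z - K 1))" using fin by simp
      show "\<And>y. y \<in> Dist ` (Z - K 1) \<Longrightarrow> V \<le> y" using lower by blast
      show "V \<in> Dist ` (Z - K 1)" using att g0(1) by force
    qed
    have "{1..<j0} = {1..j0-1}" using j0r by auto
    then have dps: "d = 2 * ps (j0 - 1)" unfolding dV V_def ps_def by (simp add: sum_distrib_left)
    have S1Z: "S 1 \<noteq> Z" using False Sdef by auto
    have p2: "d \<in> {0} \<union> {2 * (\<Sum>i=1..k. t i) | k. k \<in> {1..r}}"
      using dps j0r unfolding ps_def by auto
    have p3: "d \<noteq> 0" using dps pspos[of "j0 - 1"] j0r by auto
    have JS: "J = {} \<longleftrightarrow> S 1 = S r"
    proof
      assume "J = {}"
      show "S 1 = S r"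
      proof (cases "r = 1")
        case False
        then have "r \<in> {2..r}" using r1 by auto
        then have "\<not> S 1 \<subset> S r" using \<open>J = {}\<close> unfolding J_def by auto
        then show ?thesis using Smono[of 1 r] r1 by auto
      qed simp
    next
      assume e: "S 1 = S r"
      show "J = {}"
      proof (rule ccontr)
        assume "J \<noteq> {}"
        then obtain j where "j \<in> J" by blast
        then have "S 1 \<subset> S j" "j \<le> r" "j \<ge> 1" unfolding J_def by auto
        then show False using Smono[of j r] e by auto
      qed
    qed
    have p4: "d = 2 * ps r \<longleftrightarrow> J = {}"
    proof -
      have "d = 2 * ps r \<longleftrightarrow> j0 - 1 = r" using dps psinj[of "j0 - 1" r] j0r by auto
      also have "\<dots> \<longleftrightarrow> J = {}"
      proof (cases "J = {}")
        case True then show ?thesis unfolding j0_def by simp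
      next
        case False
        then have "j0 \<in> J" by (rule j0J)
        then have "j0 \<le> r" unfolding J_def by simp
        then show ?thesis using False j0r by simp
      qed
      finally show ?thesis .
    qed
    have p5: "d = 2 * ps (j - 1) \<longleftrightarrow>
          S 1 \<noteq> S r \<and> S 1 \<subset> S j \<and> (\<forall>k\<in>{2..<j}. \<not> S 1 \<subset> S k)" if j: "j \<in> {2..r}" for j
    proof -
      have "j0 - 1 \<le> r" "j - 1 \<le> r" using j0r j by auto
      then have "ps (j0 - 1) = ps (j - 1) \<longleftrightarrow> j0 - 1 = j - 1" by (rule psinj)
      also have "\<dots> \<longleftrightarrow> j0 = j" using j0r j by auto
      finally have "d = 2 * ps (j - 1) \<longleftrightarrow> j0 = j" using dps by simp
      also have "\<dots> \<longleftrightarrow> S 1 \<noteq> S r \<and> S 1 \<subset> S j \<and> (\<forall>k\<in>{2..<j}. \<not> S 1 \<subset> S k)"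
      proof
        assume e: "j0 = j"
        then have "J \<noteq> {}" using j unfolding j0_def by auto
        then have "j \<in> J" using j0J e by simp
        moreover have "\<forall>k\<in>{2..<j}. \<not> S 1 \<subset> S k"
        proof (intro ballI notI)
          fix k assume "k \<in> {2..<j}" "S 1 \<subset> S k"
          then have "k \<in> J" using j unfolding J_def by auto
          then show False using j0min e \<open>k \<in> {2..<j}\<close> by fastforce
        qed
        ultimately show "S 1 \<noteq> S r \<and> S 1 \<subset> S j \<and> (\<forall>k\<in>{2..<j}. \<not> S 1 \<subset> S k)"
          using JS \<open>J \<noteq> {}\<close> unfolding J_def by auto
      next
        assume h: "S 1 \<noteq> S r \<and> S 1 \<subset> S j \<and> (\<forall>k\<in>{2..<j}. \<not> S 1 \<subset> S k)"
        then have jJ: "j \<in> J" using j unfolding J_def by auto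
        then have "J \<noteq> {}" by auto
        then have "j0 \<in> J" by (rule j0J)
        moreover have "j0 \<le> j" using j0min jJ by simp
        ultimately have "j0 \<in> {2..r}" "S 1 \<subset> S j0" "j0 \<le> j" unfolding J_def by auto
        then show "j0 = j" using h by (metis atLeastAtMost_iff atLeastLessThan_iff le_neq_implies_less)
      qed
      finally show ?thesis .
    qed
    show ?thesis using p2 p3 S1Z p4 JS p5 unfolding ps_def by auto
  qed
qed

lemma sdim_eq:
  assumes "q \<ge> 2" "card U = q ^ k" shows "sdim q U = k"
  unfolding sdim_def
proof (rule the_equality)
  show "card U = q ^ k" by fact
  fix k' assume "card U = q ^ k'"
  then have "q ^ k' = q ^ k" using assms by simp
  then show "k' = k" using assms(1) power_inject_exp[of q k' k] by simp
qed

lemma sub_1: "(1::'a::{field,finite}) \<in> subfield_of_order q t"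
  unfolding subfield_of_order_def by simp

lemma scale_eq:
  fixes a b :: "'a::{field,finite}"
  assumes "a \<noteq> 0" "b \<noteq> 0"
  shows "set_scale (subfield_of_order q t) a = set_scale (subfield_of_order q t) b
         \<longleftrightarrow> b / a \<in> subfield_of_order q t"
proof
  assume e: "set_scale (subfield_of_order q t) a = set_scale (subfield_of_order q t) b"
  have "b \<in> set_scale (subfield_of_order q t) b" unfolding set_scale_def using sub_1 by force
  then obtain u where u: "u \<in> subfield_of_order q t" "b = u * a" using e unfolding set_scale_def by auto
  then show "b / a \<in> subfield_of_order q t" using assms by simp
next
  assume c: "b / a \<in> subfield_of_order q t"
  have ci: "a / b \<in> subfield_of_order q t"
    using sub_inverse[OF c] by (simp add: inverse_divide)
  show "set_scale (subfield_of_order q t) a = set_scale (subfield_of_order q t) b"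
  proof
    show "set_scale (subfield_of_order q t) a \<subseteq> set_scale (subfield_of_order q t) b"
    proof
      fix x assume "x \<in> set_scale (subfield_of_order q t) a"
      then obtain u where u: "u \<in> subfield_of_order q t" "x = u * a" unfolding set_scale_def by auto
      have "u * (a / b) \<in> subfield_of_order q t" by (rule sub_mult[OF u(1) ci])
      moreover have "x = (u * (a / b)) * b" using u assms by simp
      ultimately show "x \<in> set_scale (subfield_of_order q t) b" unfolding set_scale_def by blast
    qed
    show "set_scale (subfield_of_order q t) b \<subseteq> set_scale (subfield_of_order q t) a"
    proof
      fix x assume "x \<in> set_scale (subfield_of_order q t) b"
      then obtain u where u: "u \<in> subfield_of_order q t" "x = u * b" unfolding set_scale_def by auto
      have "u * (b / a) \<in> subfield_of_order q t" by (rule sub_mult[OF u(1) c])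
      moreover have "x = (u * (b / a)) * a" using u assms by simp
      ultimately show "x \<in> set_scale (subfield_of_order q t) a" unfolding set_scale_def by blast
    qed
  qed
qed

lemma set_scale_1: "set_scale U (1::'a::monoid_mult) = U"
  unfolding set_scale_def by simp

lemma dist_scale:
  fixes a b :: "'a::{field,finite}"
  assumes qc: "q = CHAR('a) ^ kk" and q2: "q \<ge> 2" and cd: "CARD('a) = q ^ n"
    and tn: "t dvd n" and t0: "t > 0" and a0: "a \<noteq> 0" and b0: "b \<noteq> 0"
  shows "subspace_dist q (set_scale (subfield_of_order q t) a) (set_scale (subfield_of_order q t) b)
         = (if b / a \<in> subfield_of_order q t then 0 else 2 * t)"
proof -
  define K :: "'a set" where "K = subfield_of_order q t"
  have cK: "card K = q ^ t" unfolding K_def by (rule card_sub[OF cd q2 tn t0])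
  have cs: "card (set_scale K c) = q ^ t" if "c \<noteq> 0" for c
  proof -
    have "inj_on (\<lambda>u. u * c) K" using that by (auto intro: inj_onI)
    then show ?thesis unfolding set_scale_def using cK by (simp add: card_image)
  qed
  have q0: "q > 0" using q2 by simp
  have cl: "x + y \<in> set_scale K c" "x - y \<in> set_scale K c" "0 \<in> set_scale K c"
    if hx: "x \<in> set_scale K c" and hy: "y \<in> set_scale K c" for x y c
  proof -
    obtain u where u: "u \<in> K" "x = u * c" using hx unfolding set_scale_def by blast
    obtain v where v: "v \<in> K" "y = v * c" using hy unfolding set_scale_def by blast
    note uv = u(1) v(1) u(2) v(2)
    have "u + v \<in> K" "u - v \<in> K" "0 \<in> K" unfolding K_def
      using sub_add[OF qc] sub_0[OF q0] uv unfolding K_def by auto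
    moreover have "x + y = (u + v) * c" "x - y = (u - v) * c" "0 = 0 * c"
      using uv by (auto simp: algebra_simps)
    ultimately show "x + y \<in> set_scale K c" "x - y \<in> set_scale K c" "0 \<in> set_scale K c"
      unfolding set_scale_def by blast+
  qed
  have z: "0 \<in> set_scale K c" for c
    using sub_0[OF q0] unfolding K_def set_scale_def by force
  show ?thesis
  proof (cases "b / a \<in> K")
    case True
    then have e: "set_scale K b = set_scale K a" using scale_eq[OF a0 b0, of q t] unfolding K_def by simp
    have ss: "ssum (set_scale K a) (set_scale K a) = set_scale K a"
    proof
      show "ssum (set_scale K a) (set_scale K a) \<subseteq> set_scale K a"
        unfolding ssum_def using cl by blast
      show "set_scale K a \<subseteq> ssum (set_scale K a) (set_scale K a)"
        unfolding ssum_def using z by force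
    qed
    show ?thesis unfolding subspace_dist_def using True e ss unfolding K_def by simp
  next
    case False
    define V where "V = set_scale K a"
    define W where "W = set_scale K b"
    have int: "V \<inter> W = {0}"
    proof
      show "V \<inter> W \<subseteq> {0}"
      proof
        fix x assume "x \<in> V \<inter> W"
        then obtain u v where uv: "u \<in> K" "v \<in> K" "x = u * a" "x = v * b"
          unfolding V_def W_def set_scale_def by auto
        show "x \<in> {0}"
        proof (cases "v = 0")
          case True then show ?thesis using uv by simp
        next
          case v0: False
          have "b / a = u / v" using uv v0 a0 b0 by (simp add: field_simps)
          moreover have "u / v \<in> K" using sub_mult[OF uv(1)[unfolded K_def] sub_inverse[OF uv(2)[unfolded K_def]]] unfolding K_def
            by (simp add: divide_inverse)
          ultimately show ?thesis using False by simp
        qed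
      qed
      show "{0} \<subseteq> V \<inter> W" using z unfolding V_def W_def by simp
    qed
    have sv: "ssum V W = (\<lambda>(x, y). x + y) ` (V \<times> W)" unfolding ssum_def by auto
    have inj: "inj_on (\<lambda>(x, y). x + y) (V \<times> W)"
    proof (rule inj_onI, clarify)
      fix x y x' y' assume h: "x \<in> V" "y \<in> W" "x' \<in> V" "y' \<in> W" "x + y = x' + y'"
      have "x - x' = y' - y" using h(5) by (simp add: algebra_simps)
      moreover have "x - x' \<in> V" using cl(2) h(1,3) unfolding V_def by blast
      moreover have "y' - y \<in> W" using cl(2) h(2,4) unfolding W_def by blast
      ultimately have "x - x' \<in> V \<inter> W" by simp
      then have "x - x' = 0" using int by simp
      then show "x = x' \<and> y = y'" using h(5) by simp
    qed
    have "card (ssum V W) = card V * card W" unfolding sv using inj by (simp add: card_image card_cartesian_product)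
    also have "\<dots> = q ^ (2 * t)" unfolding V_def W_def using cs a0 b0 by (simp add: power_add mult_2)
    finally have s1: "sdim q (ssum V W) = 2 * t" by (rule sdim_eq[OF q2])
    have s2: "sdim q (V \<inter> W) = 0" using int by (intro sdim_eq[OF q2]) simp
    show ?thesis using s1 s2 False unfolding subspace_dist_def V_def W_def K_def by simp
  qed
qed

lemma sum_list_map2_map:
  "sum_list (map2 h (map f xs) (map g xs)) = sum_list (map (\<lambda>x. h (f x) (g x)) xs)"
  by (induction xs) auto

lemma flag_scale_galois:
  "flag_scale (galois_flag q r t) a = map (\<lambda>i. set_scale (subfield_of_order q (t i)) a) [1..<r+1]"
  unfolding flag_scale_def galois_flag_def by simp

lemma flag_dist_scale:
  fixes a b :: "'a::{field,finite}"
  assumes qc: "q = CHAR('a) ^ kk" and q2: "q \<ge> 2" and cd: "CARD('a) = q ^ n"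
    and tt: "\<forall>i\<in>{1..r}. t i dvd n \<and> t i > 0" and a0: "a \<noteq> 0" and b0: "b \<noteq> 0"
  shows "flag_dist q (flag_scale (galois_flag q r t) a) (flag_scale (galois_flag q r t) b :: 'a set list)
      = (\<Sum>i\<in>{1..r}. if b / a \<in> subfield_of_order q (t i) then 0 else 2 * t i)"
proof -
  have "flag_dist q (flag_scale (galois_flag q r t) a) (flag_scale (galois_flag q r t) b :: 'a set list)
     = sum_list (map (\<lambda>i. subspace_dist q (set_scale (subfield_of_order q (t i)) a)
                                 (set_scale (subfield_of_order q (t i)) b)) [1..<r+1])"
    unfolding flag_dist_def flag_scale_galois by (rule sum_list_map2_map)
  also have "\<dots> = (\<Sum>i\<in>{1..<r+1}. subspace_dist q (set_scale (subfield_of_order q (t i)) a)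
                                 (set_scale (subfield_of_order q (t i)) b))"
    by (rule sum_list_distinct_conv_sum_set[of "[1..<r+1]", unfolded set_upt]) simp
  also have "{1..<r+1} = {1..r}" by auto
  also have "(\<Sum>i\<in>{1..r}. subspace_dist q (set_scale (subfield_of_order q (t i)) a)
                                 (set_scale (subfield_of_order q (t i)) b))
     = (\<Sum>i\<in>{1..r}. if b / a \<in> subfield_of_order q (t i) then 0 else 2 * t i)"
    using tt by (intro sum.cong refl dist_scale[OF qc q2 cd _ _ a0 b0]) auto
  finally show ?thesis .
qed

lemma flag_eq:
  fixes a b :: "'a::{field,finite}"
  assumes r1: "r \<ge> 1" and nest: "\<forall>i\<in>{1..r}. subfield_of_order q (t 1) \<subseteq> (subfield_of_order q (t i) :: 'a set)"
    and a0: "a \<noteq> 0" and b0: "b \<noteq> 0"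
  shows "flag_scale (galois_flag q r t) a = (flag_scale (galois_flag q r t) b :: 'a set list)
     \<longleftrightarrow> b / a \<in> subfield_of_order q (t 1)"
proof -
  have "flag_scale (galois_flag q r t) a = (flag_scale (galois_flag q r t) b :: 'a set list)
     \<longleftrightarrow> (\<forall>i\<in>set [1..<r+1]. set_scale (subfield_of_order q (t i)) a = set_scale (subfield_of_order q (t i)) b)"
    unfolding flag_scale_galois by (rule map_eq_conv)
  also have "\<dots> \<longleftrightarrow> (\<forall>i\<in>{1..r}. b / a \<in> subfield_of_order q (t i))"
    using scale_eq[OF a0 b0] by auto
  also have "\<dots> \<longleftrightarrow> b / a \<in> subfield_of_order q (t 1)" using nest r1 by auto
  finally show ?thesis .
qed


theorem theorem4p14:
  fixes \<beta> :: "'a::{field,finite}" and q n r :: nat and t :: "nat \<Rightarrow> nat"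
  assumes "prime_power q"
    and "CARD('a) = q ^ n"
    and "r \<ge> 1"
    and "1 \<le> t 1"
    and "\<forall>i. 1 \<le> i \<and> i < r \<longrightarrow> t i < t (i + 1)"
    and "t r < n"
    and "\<forall>i\<in>{1..r}. t i dvd n"
    and "\<forall>i. 1 \<le> i \<and> i \<le> r - 1 \<longrightarrow> t i dvd t (i + 1)"
    and "\<beta> \<noteq> 0"
  defines "S \<equiv> (\<lambda>i. stab \<beta> (subfield_of_order q (t i) :: 'a set))"
    and "d \<equiv> min_flag_dist q (orbit \<beta> (galois_flag q r t :: 'a set list))"
  shows "(\<forall>i\<in>{1..r}. S i = cyc \<beta> \<inter> (subfield_of_order q (t i) - {0}))
    \<and> d \<in> {0} \<union> {2 * (\<Sum>i=1..k. t i) | k. k \<in> {1..r}}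
    \<and> (d = 0 \<longleftrightarrow> S 1 = cyc \<beta> \<and> S r = cyc \<beta>)
    \<and> (d = 2 * (\<Sum>i=1..r. t i) \<longleftrightarrow> S 1 = S r \<and> S 1 \<noteq> cyc \<beta>)
    \<and> (\<forall>j\<in>{2..r}. d = 2 * (\<Sum>i=1..j-1. t i) \<longleftrightarrow>
          S 1 \<noteq> S r \<and> S 1 \<subset> S j \<and> (\<forall>k\<in>{2..<j}. \<not> S 1 \<subset> S k))"
proof -
  obtain p kp where pk: "prime p" "kp > 0" "q = p ^ kp" using assms(1) unfolding prime_power_def by blast
  have "p \<ge> 2" using pk(1) by (simp add: prime_ge_2_nat)
  moreover have "p \<le> p ^ kp" using pk(2) \<open>p \<ge> 2\<close> by (simp add: self_le_power)
  ultimately have q2: "q \<ge> 2" using pk(3) by simp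
  obtain kk where qc: "q = CHAR('a) ^ kk" using char_q[OF assms(1) assms(2)] by blast
  have t1le: "1 \<le> i \<longrightarrow> i \<le> r \<longrightarrow> t 1 \<le> t i" for i
  proof (induction i)
    case 0 then show ?case by simp
  next
    case (Suc i)
    show ?case
    proof (cases "i = 0")
      case True then show ?thesis by simp
    next
      case False
      then show ?thesis using Suc assms(5) by (metis Suc_eq_plus1 Suc_le_eq le_trans less_imp_le_nat not_less_eq_eq One_nat_def le_add2 Suc_leI neq0_conv)
    qed
  qed
  have tt: "\<forall>i\<in>{1..r}. t i dvd n \<and> t i > 0" using assms(7) assms(4) t1le by fastforce
  have tdvd: "1 \<le> i \<longrightarrow> i \<le> j \<longrightarrow> j \<le> r \<longrightarrow> t i dvd t j" for i j
  proof (induction j)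
    case 0 then show ?case by simp
  next
    case (Suc j)
    show ?case
    proof (intro impI)
      assume h: "1 \<le> i" "i \<le> Suc j" "Suc j \<le> r"
      show "t i dvd t (Suc j)"
      proof (cases "i = Suc j")
        case True then show ?thesis by simp
      next
        case False
        then have "i \<le> j" "1 \<le> j" using h by auto
        then have "t i dvd t j" using Suc h by simp
        moreover have "t j dvd t (j + 1)" using assms(8) \<open>1 \<le> j\<close> h(3) by simp
        ultimately show ?thesis using dvd_trans by simp
      qed
    qed
  qed
  define K where "K = (\<lambda>i. subfield_of_order q (t i) :: 'a set)"
  have nest: "\<forall>i j. 1 \<le> i \<and> i \<le> j \<and> j \<le> r \<longrightarrow> K i \<subseteq> K j"
    unfolding K_def using tdvd sub_mono by blast
  have nest1: "\<forall>i\<in>{1..r}. subfield_of_order q (t 1) \<subseteq> (subfield_of_order q (t i) :: 'a set)"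
    using nest unfolding K_def by auto
  define N where "N = CARD('a) - 1"
  have bN: "\<beta> ^ N = 1" unfolding N_def by (rule pow_card_minus1[OF assms(9)])
  have N0: "N > 0" unfolding N_def using card_ge2[where 'a='a] by simp
  define ord where "ord = mult_order \<beta>"
  have ordp: "ord > 0 \<and> \<beta> ^ ord = 1" unfolding ord_def mult_order_def
    by (rule LeastI[of "\<lambda>k. k > 0 \<and> \<beta> ^ k = 1" N]) (use bN N0 in simp)
  have cycE: "cyc \<beta> = {\<beta> ^ j | j. j \<le> mult_order \<beta> - 1}"
  proof
    show "cyc \<beta> \<subseteq> {\<beta> ^ j | j. j \<le> mult_order \<beta> - 1}"
    proof
      fix x assume "x \<in> cyc \<beta>"
      then obtain j where j: "x = \<beta> ^ j" unfolding cyc_def by blast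
      have "\<beta> ^ j = \<beta> ^ (ord * (j div ord) + j mod ord)" by simp
      also have "\<dots> = (\<beta> ^ ord) ^ (j div ord) * \<beta> ^ (j mod ord)" by (simp only: power_add power_mult)
      also have "\<dots> = \<beta> ^ (j mod ord)" using ordp by simp
      finally have "x = \<beta> ^ (j mod ord)" using j by simp
      moreover have "j mod ord < ord" using ordp by simp
      then have "j mod ord \<le> ord - 1" by linarith
      ultimately show "x \<in> {\<beta> ^ j | j. j \<le> mult_order \<beta> - 1}" unfolding ord_def by blast
    qed
    show "{\<beta> ^ j | j. j \<le> mult_order \<beta> - 1} \<subseteq> cyc \<beta>" unfolding cyc_def by blast
  qed
  have c0: "0 \<notin> cyc \<beta>" unfolding cyc_def using assms(9) by auto
  have cnz: "x \<in> cyc \<beta> \<Longrightarrow> x \<noteq> 0" for x using c0 by auto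
  have c1: "1 \<in> cyc \<beta>" unfolding cyc_def by (metis (mono_tags) mem_Collect_eq power_0)
  have cdiv: "b / a \<in> cyc \<beta>" if ha: "a \<in> cyc \<beta>" and hb: "b \<in> cyc \<beta>" for a b
  proof -
    obtain i where i: "a = \<beta> ^ i" using ha unfolding cyc_def by blast
    obtain j where j: "b = \<beta> ^ j" using hb unfolding cyc_def by blast
    have "\<beta> ^ i * \<beta> ^ (i * (N - 1)) = \<beta> ^ (i * N)"
      using N0 by (simp add: power_add[symmetric] algebra_simps)
    also have "\<dots> = 1" using bN by (simp add: power_mult[symmetric] mult.commute[of i] power_mult)
    finally have "inverse (\<beta> ^ i) = \<beta> ^ (i * (N - 1))" by (rule inverse_unique)
    then have "b / a = \<beta> ^ (j + i * (N - 1))" using i j by (simp add: divide_inverse power_add)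
    then show ?thesis unfolding cyc_def by blast
  qed
  have Seq: "S = (\<lambda>i. cyc \<beta> \<inter> K i)"
  proof
    fix i
    have "set_scale (K i) \<gamma> = K i \<longleftrightarrow> \<gamma> \<in> K i" if "\<gamma> \<in> cyc \<beta>" for \<gamma>
      using scale_eq[of 1 \<gamma> q "t i"] cnz[OF that] set_scale_1[of "K i"] unfolding K_def by auto
    then show "S i = cyc \<beta> \<inter> K i" unfolding S_def stab_def K_def by auto
  qed
  have part1: "\<forall>i\<in>{1..r}. S i = cyc \<beta> \<inter> (subfield_of_order q (t i) - {0})"
    using Seq c0 unfolding K_def by auto
  define Dist where "Dist = (\<lambda>\<gamma>. \<Sum>i\<in>{1..r}. if \<gamma> \<in> K i then 0 else 2 * t i)"
  define G where "G = (galois_flag q r t :: 'a set list)"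
  define C where "C = orbit \<beta> G"
  have CE: "C = (\<lambda>\<gamma>. flag_scale G \<gamma>) ` cyc \<beta>" unfolding C_def orbit_def cycE by auto
  have finC: "finite C" unfolding CE by simp
  have feq: "flag_scale G a = flag_scale G b \<longleftrightarrow> b / a \<in> K 1" if "a \<in> cyc \<beta>" "b \<in> cyc \<beta>" for a b
    unfolding G_def K_def by (rule flag_eq[OF assms(3) nest1 cnz[OF that(1)] cnz[OF that(2)]])
  have fd: "flag_dist q (flag_scale G a) (flag_scale G b) = Dist (b / a)" if "a \<in> cyc \<beta>" "b \<in> cyc \<beta>" for a b
    unfolding G_def Dist_def K_def by (rule flag_dist_scale[OF qc q2 assms(2) tt cnz[OF that(1)] cnz[OF that(2)]])
  have dE: "d = (if cyc \<beta> \<subseteq> K 1 then 0 else Min (Dist ` (cyc \<beta> - K 1)))"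
  proof (cases "cyc \<beta> \<subseteq> K 1")
    case True
    have "C = {flag_scale G 1}"
    proof
      show "C \<subseteq> {flag_scale G 1}"
      proof
        fix F assume "F \<in> C"
        then obtain \<gamma> where g: "\<gamma> \<in> cyc \<beta>" "F = flag_scale G \<gamma>" unfolding CE by blast
        have "flag_scale G 1 = flag_scale G \<gamma>" using feq[OF c1 g(1)] True g(1) by auto
        then show "F \<in> {flag_scale G 1}" using g by simp
      qed
      show "{flag_scale G 1} \<subseteq> C" unfolding CE using c1 by blast
    qed
    then have "card C \<le> 1" by simp
    then show ?thesis using True unfolding d_def min_flag_dist_def C_def[symmetric] G_def[symmetric] by simp
  next
    case False
    then obtain \<gamma>0 where g0: "\<gamma>0 \<in> cyc \<beta>" "\<gamma>0 \<notin> K 1" by blast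
    have ne: "flag_scale G 1 \<noteq> flag_scale G \<gamma>0" using feq[OF c1 g0(1)] g0 by simp
    have "{flag_scale G 1, flag_scale G \<gamma>0} \<subseteq> C" unfolding CE using c1 g0 by blast
    then have "card {flag_scale G 1, flag_scale G \<gamma>0} \<le> card C" by (rule card_mono[OF finC])
    then have cC: "\<not> card C \<le> 1" using ne by simp
    have PE: "{flag_dist q F G' | F G'. F \<in> C \<and> G' \<in> C \<and> F \<noteq> G'} = Dist ` (cyc \<beta> - K 1)"
    proof
      show "{flag_dist q F G' | F G'. F \<in> C \<and> G' \<in> C \<and> F \<noteq> G'} \<subseteq> Dist ` (cyc \<beta> - K 1)"
      proof
        fix x assume "x \<in> {flag_dist q F G' | F G'. F \<in> C \<and> G' \<in> C \<and> F \<noteq> G'}"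
        then obtain F G' where h: "x = flag_dist q F G'" "F \<in> C" "G' \<in> C" "F \<noteq> G'" by blast
        obtain a where a: "a \<in> cyc \<beta>" "F = flag_scale G a" using h(2) unfolding CE by blast
        obtain b where b: "b \<in> cyc \<beta>" "G' = flag_scale G b" using h(3) unfolding CE by blast
        have "b / a \<notin> K 1" using feq[OF a(1) b(1)] h(4) a b by simp
        moreover have "b / a \<in> cyc \<beta>" by (rule cdiv[OF a(1) b(1)])
        moreover have "x = Dist (b / a)" using h(1) a b fd by simp
        ultimately show "x \<in> Dist ` (cyc \<beta> - K 1)" by blast
      qed
      show "Dist ` (cyc \<beta> - K 1) \<subseteq> {flag_dist q F G' | F G'. F \<in> C \<and> G' \<in> C \<and> F \<noteq> G'}"
      proof
        fix x assume "x \<in> Dist ` (cyc \<beta> - K 1)"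
        then obtain \<gamma> where g: "\<gamma> \<in> cyc \<beta>" "\<gamma> \<notin> K 1" "x = Dist \<gamma>" by blast
        have "x = flag_dist q (flag_scale G 1) (flag_scale G \<gamma>)" using fd[OF c1 g(1)] g by simp
        moreover have "flag_scale G 1 \<noteq> flag_scale G \<gamma>" using feq[OF c1 g(1)] g by simp
        moreover have "flag_scale G 1 \<in> C" "flag_scale G \<gamma> \<in> C" unfolding CE using c1 g by auto
        ultimately show "x \<in> {flag_dist q F G' | F G'. F \<in> C \<and> G' \<in> C \<and> F \<noteq> G'}" by blast
      qed
    qed
    have "d = Min {flag_dist q F G' | F G'. F \<in> C \<and> G' \<in> C \<and> F \<noteq> G'}"
      using cC unfolding d_def min_flag_dist_def C_def[symmetric] G_def[symmetric] by simp
    then show ?thesis using PE False by simp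
  qed
  have rest: "d \<in> {0} \<union> {2 * (\<Sum>i=1..k. t i) | k. k \<in> {1..r}}
    \<and> (d = 0 \<longleftrightarrow> S 1 = cyc \<beta> \<and> S r = cyc \<beta>)
    \<and> (d = 2 * (\<Sum>i=1..r. t i) \<longleftrightarrow> S 1 = S r \<and> S 1 \<noteq> cyc \<beta>)
    \<and> (\<forall>j\<in>{2..r}. d = 2 * (\<Sum>i=1..j-1. t i) \<longleftrightarrow>
          S 1 \<noteq> S r \<and> S 1 \<subset> S j \<and> (\<forall>k\<in>{2..<j}. \<not> S 1 \<subset> S k))"
    by (rule combi[OF _ assms(3) _ nest Seq dE[unfolded Dist_def]]) (use tt in auto)
  show ?thesis using part1 rest by blast
qed

end
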